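(* Suppose $x_j(0)=y_j(0)=0$ for all individuals $j=1,\dots,n$, and let $i$ be an individual with $\alpha_i=\min_j\alpha_j$. If individual $i$ acts for the first time at time $t$, then every other individual has acted (for the first time) at some time $\le t$. Equivalently, an individual with larger $\alpha$ takes its first action no later than an individual with smaller $\alpha$.
   Context: Model: Fix an integer $n\ge 2$ (number of individuals) and parameters $\sigma_A,\sigma_S\ge 0$, $\sigma_C>0$, $\mu_S\in[0,1]$, $\mu_C>0$, $r>0$, $\tau\in(0,1)$, $\alpha_1,\dots,\alpha_n\in(-1,1)$. Individual $i$ has state $(x_i(t),y_i(t))$, $x_i\in(-1,1)$, $y_i\in[0,1]$, and $\gamma_i(t)=\frac{1}{n-1}\sum_{j\neq i}y_j(t)$. Between action events the state evolves by $\dot x_i=[\sigma_A\alpha_i+\sigma_S(\gamma_i-\mu_S)]\,\sigma_C(\gamma_i+\mu_C)(1-x_i)(1+x_i)$, $\dot y_i=-ry_i$. Individual $i$ "acts" at a time $t$ when $x_i(t)$ reaches the threshold $\tau$ (i.e. $x_i(t)\ge\tau$); immediately afterwards $x_i$ is reset to $0$ and $y_i$ is reset to $1$, and the continuous evolution resumes from the new state. *)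

theory Defs
  imports "HOL-Analysis.Analysis"
begin

text \<open>Individuals are indexed by 0, ..., n-1. The state of individual i at time s is
  (x i s, y i s); trajectories are right-continuous (the value at an action time is the
  post-reset value).\<close>

definition gamma :: "nat \<Rightarrow> (nat \<Rightarrow> real \<Rightarrow> real) \<Rightarrow> nat \<Rightarrow> real \<Rightarrow> real" where
  "gamma n y i s = (1 / (real n - 1)) * (\<Sum>j\<in>{..<n} - {i}. y j s)"

definition xrate ::
  "real \<Rightarrow> real \<Rightarrow> real \<Rightarrow> real \<Rightarrow> real \<Rightarrow> real \<Rightarrow> real \<Rightarrow> real \<Rightarrow> real" where
  "xrate sA sS sC muS muC a g xv =
     (sA * a + sS * (g - muS)) * sC * (g + muC) * (1 - xv) * (1 + xv)"

definition acts :: "(nat \<Rightarrow> real \<Rightarrow> real) \<Rightarrow> real \<Rightarrow> nat \<Rightarrow> real \<Rightarrow> bool" where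
  "acts x tau i s \<longleftrightarrow> 0 < s \<and> (x i \<longlongrightarrow> tau) (at_left s)"

definition trajectory ::
  "nat \<Rightarrow> real \<Rightarrow> real \<Rightarrow> real \<Rightarrow> real \<Rightarrow> real \<Rightarrow> real \<Rightarrow> real \<Rightarrow> (nat \<Rightarrow> real)
   \<Rightarrow> (nat \<Rightarrow> real) \<Rightarrow> (nat \<Rightarrow> real)
   \<Rightarrow> (nat \<Rightarrow> real \<Rightarrow> real) \<Rightarrow> (nat \<Rightarrow> real \<Rightarrow> real) \<Rightarrow> bool" where
  "trajectory n sA sS sC muS muC r tau alpha x0 y0 x y \<longleftrightarrow>
     (\<forall>i<n. x i 0 = x0 i \<and> y i 0 = y0 i) \<and>
     (\<forall>i<n. \<forall>s\<ge>0. x i s < tau) \<and>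
     (\<forall>i<n. \<forall>s>0. acts x tau i s \<longrightarrow> x i s = 0 \<and> y i s = 1) \<and>
     (\<forall>i<n. \<forall>s>0. \<not> acts x tau i s \<longrightarrow>
         continuous (at_left s) (x i) \<and> continuous (at_left s) (y i)) \<and>
     (\<forall>i<n. \<forall>s\<ge>0.
         (x i has_real_derivative
            xrate sA sS sC muS muC (alpha i) (gamma n y i s) (x i s)) (at_right s) \<and>
         (y i has_real_derivative (- r * y i s)) (at_right s))"

end

theory Submission
  imports Defs
begin


lemma cont_Icc:
  fixes f :: "real \<Rightarrow> real"
  assumes "a \<le> b" "\<forall>s\<in>{a<..b}. continuous (at_left s) f"
    "\<forall>s\<in>{a..<b}. continuous (at_right s) f"
  shows "continuous_on {a..b} f"
proof (cases "a = b")
  case True then show ?thesis by simp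
next
  case False
  then have ab: "a < b" using assms(1) by simp
  show ?thesis unfolding continuous_on_eq_continuous_within
  proof
    fix s assume s: "s \<in> {a..b}"
    consider "s = a" | "s = b" | "a < s" "s < b" using s by force
    then show "continuous (at s within {a..b}) f"
    proof cases
      case 1 then show ?thesis using ab assms(3) by (simp add: at_within_Icc_at_right)
    next
      case 2 then show ?thesis using ab assms(2) by (simp add: at_within_Icc_at_left)
    next
      case 3 then show ?thesis using assms(2,3) by (simp add: at_within_Icc_at continuous_at_split)
    qed
  qed
qed

lemma incr_right:
  fixes f D :: "real \<Rightarrow> real"
  assumes ab: "a \<le> b" and cont: "continuous_on {a..b} f"
    and der: "\<forall>s\<in>{a..<b}. (f has_real_derivative D s) (at_right s) \<and> D s \<ge> 0"
  shows "f a \<le> f b"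
proof -
  have key: "f a \<le> f b + e * (b - a)" if e: "e > 0" for e
  proof -
    define T where "T = {s\<in>{a..b}. \<forall>u\<in>{a..s}. f a \<le> f u + e * (u - a)}"
    define c where "c = Sup T"
    have aT: "a \<in> T" unfolding T_def using ab by auto
    have bdd: "bdd_above T" unfolding T_def by (auto intro: bdd_aboveI[of _ b])
    have ac: "a \<le> c" unfolding c_def using aT bdd by (rule cSup_upper)
    have cb: "c \<le> b" unfolding c_def using aT by (intro cSup_least) (auto simp: T_def)
    have below: "f a \<le> f u + e * (u - a)" if "a \<le> u" "u < c" for u
    proof -
      obtain s where "s \<in> T" "u < s" using \<open>u < c\<close> aT bdd unfolding c_def
        using less_cSup_iff[of T u] by blast
      then show ?thesis using that unfolding T_def by auto
    qed
    have cT: "c \<in> T"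
    proof (cases "a = c")
      case True then show ?thesis using aT by simp
    next
      case False
      then have ac': "a < c" using ac by simp
      have contc: "continuous_on {a..c} (\<lambda>u. f u + e * (u - a))"
        using cont cb by (auto intro!: continuous_intros elim: continuous_on_subset)
      have cl: "closed ({a..c} \<inter> (\<lambda>u. f u + e * (u - a)) -` {f a..})"
        by (rule continuous_closed_preimage[OF contc]) auto
      have sub: "{a..<c} \<subseteq> {a..c} \<inter> (\<lambda>u. f u + e * (u - a)) -` {f a..}"
        using below by auto
      have "closure {a..<c} \<subseteq> {a..c} \<inter> (\<lambda>u. f u + e * (u - a)) -` {f a..}"
        using closure_minimal[OF sub cl] .
      then have "\<forall>u\<in>{a..c}. f a \<le> f u + e * (u - a)" using ac' by auto
      then show ?thesis unfolding T_def using ac cb by auto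
    qed
    have "c = b"
    proof (rule ccontr)
      assume "c \<noteq> b"
      then have cb': "c < b" using cb by simp
      then have d: "(f has_real_derivative D c) (at_right c)" "D c \<ge> 0" using der ac by auto
      have "((\<lambda>y. (f y - f c) / (y - c)) \<longlongrightarrow> D c) (at_right c)"
        using d(1) by (simp add: has_field_derivative_iff)
      then have "eventually (\<lambda>y. - e < (f y - f c) / (y - c)) (at_right c)"
        by (rule order_tendstoD(1)) (use d(2) e in simp)
      then obtain b' where b': "b' > c" "\<And>y. y > c \<Longrightarrow> y < b' \<Longrightarrow> - e < (f y - f c) / (y - c)"
        unfolding eventually_at_right_field by blast
      define c' where "c' = min b ((c + b') / 2)"
      have cc': "c < c'" using cb' b' by (simp add: c'_def)
      have "c' \<in> T" unfolding T_def
      proof (intro CollectI conjI ballI)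
        show "c' \<in> {a..b}" using ac cc' by (auto simp: c'_def)
      next
        fix u assume u: "u \<in> {a..c'}"
        show "f a \<le> f u + e * (u - a)"
        proof (cases "u \<le> c")
          case True then show ?thesis using cT u unfolding T_def by auto
        next
          case False
          then have "u > c" "u < b'" using u b' by (auto simp: c'_def)
          then have "- e < (f u - f c) / (u - c)" using b' by auto
          then have "- e * (u - c) < f u - f c" using \<open>u > c\<close> by (simp add: field_simps)
          moreover have "f a \<le> f c + e * (c - a)" using cT unfolding T_def by auto
          ultimately show ?thesis by (simp add: algebra_simps)
        qed
      qed
      then have "c' \<le> c" unfolding c_def using bdd by (rule cSup_upper)
      then show False using cc' by simp
    qed
    then show ?thesis using cT unfolding T_def using ab by auto
  qed
  show ?thesis
  proof (cases "a = b")
    case True then show ?thesis by simp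
  next
    case False
    then have "b - a > 0" using ab by simp
    show ?thesis
    proof (rule field_le_epsilon)
      fix e :: real assume "e > 0"
      then have "f a \<le> f b + (e / (b - a)) * (b - a)" using key[of "e / (b - a)"] \<open>b - a > 0\<close> by simp
      then show "f a \<le> f b + e" using \<open>b - a > 0\<close> by simp
    qed
  qed
qed

lemma last_good:
  fixes f :: "real \<Rightarrow> real" and C :: "real set"
  assumes clC: "closed C" and f0: "f 0 \<in> C" and s0: "s0 > 0" and fs0: "f s0 \<notin> C"
    and lc: "\<forall>u\<in>{0<..s0}. f u \<notin> C \<longrightarrow> continuous (at_left u) f"
    and rc: "\<forall>u\<in>{0..<s0}. continuous (at_right u) f"
  shows "\<exists>s1. 0 \<le> s1 \<and> s1 < s0 \<and> f s1 \<in> C \<and> (\<forall>u\<in>{s1<..s0}. f u \<notin> C)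
     \<and> continuous_on {s1..s0} f"
proof -
  define S where "S = {s\<in>{0..s0}. f s \<in> C}"
  define s1 where "s1 = Sup S"
  have S0: "0 \<in> S" unfolding S_def using f0 s0 by auto
  have bdd: "bdd_above S" unfolding S_def by (auto intro: bdd_aboveI[of _ s0])
  have s1ge: "0 \<le> s1" unfolding s1_def using S0 bdd by (rule cSup_upper)
  have s1le: "s1 \<le> s0" unfolding s1_def using S0 by (intro cSup_least) (auto simp: S_def)
  have fs1: "f s1 \<in> C"
  proof (rule ccontr)
    assume nC: "f s1 \<notin> C"
    then have "s1 \<noteq> 0" using f0 by auto
    then have s1pos: "s1 > 0" using s1ge by simp
    then have "continuous (at_left s1) f" using lc nC s1le by auto
    then have "(f \<longlongrightarrow> f s1) (at_left s1)" by (simp add: continuous_within)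
    then have "eventually (\<lambda>u. f u \<in> - C) (at_left s1)"
      by (rule topological_tendstoD) (use clC nC in auto)
    then obtain b where b: "b < s1" "\<And>y. y > b \<Longrightarrow> y < s1 \<Longrightarrow> f y \<in> - C"
      unfolding eventually_at_left_field by blast
    have "s1 \<le> b" unfolding s1_def
    proof (rule cSup_least)
      show "S \<noteq> {}" using S0 by auto
    next
      fix s assume sS: "s \<in> S"
      then have "s \<le> s1" unfolding s1_def using bdd by (rule cSup_upper)
      moreover have "s \<noteq> s1" using sS nC unfolding S_def by auto
      moreover have "f s \<in> C" using sS unfolding S_def by auto
      ultimately show "s \<le> b" using b(2)[of s] by force
    qed
    then show False using b by simp
  qed
  then have "s1 \<noteq> s0" using fs0 by auto
  then have s1lt: "s1 < s0" using s1le by simp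
  have after: "\<forall>u\<in>{s1<..s0}. f u \<notin> C"
  proof
    fix u assume u: "u \<in> {s1<..s0}"
    show "f u \<notin> C"
    proof
      assume "f u \<in> C"
      then have "u \<in> S" using u s1ge unfolding S_def by auto
      then have "u \<le> s1" unfolding s1_def using bdd by (rule cSup_upper)
      then show False using u by simp
    qed
  qed
  have "continuous_on {s1..s0} f"
    by (rule cont_Icc) (use s1lt after lc rc s1ge in auto)
  then show ?thesis using s1ge s1lt fs1 after by blast
qed



lemma const_right:
  fixes f :: "real \<Rightarrow> real"
  assumes ab: "a \<le> b" and cont: "continuous_on {a..b} f"
    and der: "\<forall>s\<in>{a..<b}. (f has_real_derivative 0) (at_right s)"
  shows "f b = f a"
proof -
  have "f a \<le> f b" by (rule incr_right[OF ab cont, of "\<lambda>_. 0"]) (use der in auto)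
  moreover have "- f a \<le> - f b"
    by (rule incr_right[OF ab _, of "\<lambda>u. - f u" "\<lambda>_. 0"])
       (use der cont in \<open>auto intro!: continuous_intros derivative_eq_intros\<close>)
  ultimately show ?thesis by simp
qed

lemma exp_weight:
  fixes g :: "real \<Rightarrow> real"
  assumes "(g has_real_derivative (- r * g u)) (at_right u)"
  shows "((\<lambda>v. exp (r * v) * g v) has_real_derivative 0) (at_right u)"
proof -
  have e: "((\<lambda>v. exp (r * v)) has_real_derivative exp (r * u) * r) (at_right u)"
    by (rule DERIV_chain2[OF DERIV_exp]) (auto intro!: derivative_eq_intros)
  have "((\<lambda>v. exp (r * v) * g v) has_real_derivative
      (exp (r * u) * r) * g u + (- r * g u) * exp (r * u)) (at_right u)"
    by (rule DERIV_mult[OF e assms])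
  then show ?thesis by (simp add: algebra_simps)
qed

lemma traj_rc:
  assumes "(f has_real_derivative d) (at_right u)"
  shows "continuous (at_right u) f"
  using DERIV_continuous[OF assms] .

lemma Y_bound:
  assumes tr: "trajectory n sA sS sC muS muC r tau alpha (\<lambda>_. 0) (\<lambda>_. 0) x y"
    and r: "r > 0" and k: "k < n" and s: "s \<ge> 0"
  shows "0 \<le> y k s \<and> y k s \<le> 1"
proof (rule ccontr)
  assume nC: "\<not> (0 \<le> y k s \<and> y k s \<le> 1)"
  note T = tr[unfolded trajectory_def]
  have y0: "y k 0 = 0" using T k by auto
  then have "s \<noteq> 0" using nC by auto
  then have spos: "s > 0" using s by simp
  have "\<exists>s1. 0 \<le> s1 \<and> s1 < s \<and> y k s1 \<in> {0..1} \<and> (\<forall>u\<in>{s1<..s}. y k u \<notin> {0..1})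
     \<and> continuous_on {s1..s} (y k)"
  proof (rule last_good)
    show "\<forall>u\<in>{0<..s}. y k u \<notin> {0..1} \<longrightarrow> continuous (at_left u) (y k)"
      using T k by fastforce
    show "\<forall>u\<in>{0..<s}. continuous (at_right u) (y k)"
    proof
      fix u assume "u \<in> {0..<s}"
      then have "(y k has_real_derivative - r * y k u) (at_right u)" using T k by auto
      then show "continuous (at_right u) (y k)" by (rule traj_rc)
    qed
  qed (use y0 spos nC in auto)
  then obtain s1 where s1: "0 \<le> s1" "s1 < s" "y k s1 \<in> {0..1}"
    and cont: "continuous_on {s1..s} (y k)" by blast
  have "(\<lambda>v. exp (r * v) * y k v) s = (\<lambda>v. exp (r * v) * y k v) s1"
  proof (rule const_right[where f="\<lambda>v. exp (r * v) * y k v"])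
    show "continuous_on {s1..s} (\<lambda>v. exp (r * v) * y k v)"
      using cont by (intro continuous_intros)
    show "\<forall>u\<in>{s1..<s}. ((\<lambda>v. exp (r * v) * y k v) has_real_derivative 0) (at_right u)"
      using T k s1 by (auto intro!: exp_weight)
  qed (use s1 in simp)
  then have "y k s = exp (r * s1) / exp (r * s) * y k s1"
    by (simp add: field_simps)
  also have "exp (r * s1) / exp (r * s) = exp (- (r * (s - s1)))"
    by (simp add: exp_diff[symmetric] algebra_simps)
  finally have eq: "y k s = exp (- (r * (s - s1))) * y k s1" .
  have "exp (- (r * (s - s1))) \<le> 1" using r s1 by simp
  moreover have "exp (- (r * (s - s1))) > 0" by simp
  ultimately have "0 \<le> y k s \<and> y k s \<le> 1" unfolding eq using s1(3)
    by (auto intro: mult_le_one)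
  then show False using nC by simp
qed



lemma gamma_bound:
  assumes tr: "trajectory n sA sS sC muS muC r tau alpha (\<lambda>_. 0) (\<lambda>_. 0) x y"
    and r: "r > 0" and n: "n \<ge> 2" and k: "k < n" and u: "u \<ge> 0"
  shows "0 \<le> gamma n y k u \<and> gamma n y k u \<le> 1"
proof -
  let ?A = "{..<n} - {k}"
  have yb: "\<And>j. j \<in> ?A \<Longrightarrow> 0 \<le> y j u \<and> y j u \<le> 1"
    using Y_bound[OF tr r _ u] by auto
  have cA: "card ?A = n - 1" using k by simp
  have s0: "0 \<le> (\<Sum>j\<in>?A. y j u)" using yb by (intro sum_nonneg) auto
  have s1: "(\<Sum>j\<in>?A. y j u) \<le> of_nat (card ?A) * 1"
    using yb by (intro sum_bounded_above) auto
  have npos: "real n - 1 > 0" using n by simp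
  have "real (n - 1) = real n - 1" using n by simp
  then have s1': "(\<Sum>j\<in>?A. y j u) \<le> real n - 1" using s1 cA by simp
  show ?thesis unfolding gamma_def using s0 s1' npos
    by (auto simp: field_simps)
qed

lemma cc_bound:
  fixes sA sS sC muS muC a g :: real
  assumes "sA \<ge> 0" "sS \<ge> 0" "sC > 0" "0 \<le> muS" "muS \<le> 1" "muC > 0"
    "-1 < a" "a < 1" "0 \<le> g" "g \<le> 1"
  shows "\<bar>(sA * a + sS * (g - muS)) * sC * (g + muC)\<bar> \<le> (sA + sS) * sC * (1 + muC)"
proof -
  have "\<bar>sA * a\<bar> \<le> sA" using assms by (simp add: abs_mult mult_left_le)
  moreover have "\<bar>sS * (g - muS)\<bar> \<le> sS" using assms
    by (auto simp: abs_mult abs_le_iff intro: mult_left_le)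
  ultimately have h1: "\<bar>sA * a + sS * (g - muS)\<bar> \<le> sA + sS" by linarith
  have h2: "\<bar>g + muC\<bar> \<le> 1 + muC" using assms by simp
  have "\<bar>(sA * a + sS * (g - muS)) * sC * (g + muC)\<bar>
      = \<bar>sA * a + sS * (g - muS)\<bar> * sC * \<bar>g + muC\<bar>" using assms by (simp add: abs_mult)
  also have "\<dots> \<le> (sA + sS) * sC * (1 + muC)"
    using h1 h2 assms by (intro mult_mono) auto
  finally show ?thesis .
qed

lemma X_bound:
  assumes tr: "trajectory n sA sS sC muS muC r tau alpha (\<lambda>_. 0) (\<lambda>_. 0) x y"
    and r: "r > 0" and n: "n \<ge> 2" and k: "k < n" and s0: "s0 \<ge> 0"
    and pars: "sA \<ge> 0" "sS \<ge> 0" "sC > 0" "0 \<le> muS" "muS \<le> 1" "muC > 0" "tau < 1"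
    and al: "-1 < alpha k" "alpha k < 1"
  shows "x k s0 > -1"
proof (rule ccontr)
  assume "\<not> x k s0 > -1"
  then have bad: "x k s0 \<le> -1" by simp
  note T = tr[unfolded trajectory_def]
  have x0: "x k 0 = 0" using T k by auto
  then have "s0 \<noteq> 0" using bad by auto
  then have spos: "s0 > 0" using s0 by simp
  have "\<exists>s1. 0 \<le> s1 \<and> s1 < s0 \<and> x k s1 \<in> {0..} \<and> (\<forall>u\<in>{s1<..s0}. x k u \<notin> {0..})
     \<and> continuous_on {s1..s0} (x k)"
  proof (rule last_good)
    show "\<forall>u\<in>{0<..s0}. x k u \<notin> {0..} \<longrightarrow> continuous (at_left u) (x k)"
    proof (intro ballI impI)
      fix u assume u: "u \<in> {0<..s0}" "x k u \<notin> {0..}"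
      then have "\<not> acts x tau k u" using T k by auto
      then show "continuous (at_left u) (x k)" using T k u by auto
    qed
    show "\<forall>u\<in>{0..<s0}. continuous (at_right u) (x k)"
    proof
      fix u assume "u \<in> {0..<s0}"
      then have "(x k has_real_derivative
            xrate sA sS sC muS muC (alpha k) (gamma n y k u) (x k u)) (at_right u)"
        using T k by auto
      then show "continuous (at_right u) (x k)" by (rule traj_rc)
    qed
  qed (use x0 spos bad in auto)
  then obtain s1 where s1: "0 \<le> s1" "s1 < s0" "x k s1 \<ge> 0"
    and cont: "continuous_on {s1..s0} (x k)" by auto
  define Z where "Z = {s1..s0} \<inter> (\<lambda>u. 1 + x k u) -` {..0}"
  have contH: "continuous_on {s1..s0} (\<lambda>u. 1 + x k u)"
    using cont by (intro continuous_intros)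
  have clZ: "closed Z" unfolding Z_def
    by (rule continuous_closed_preimage[OF contH]) auto
  have "s0 \<in> Z" using bad s1 unfolding Z_def by auto
  then have Zne: "Z \<noteq> {}" by auto
  have Zbdd: "bdd_below Z" unfolding Z_def by (auto intro: bdd_belowI[of _ s1])
  define c where "c = Inf Z"
  have cZ: "c \<in> Z" unfolding c_def using closed_contains_Inf[OF Zne Zbdd clZ] .
  then have c: "s1 \<le> c" "c \<le> s0" "1 + x k c \<le> 0" unfolding Z_def by auto
  have pos: "1 + x k u > 0" if "s1 \<le> u" "u < c" for u
  proof (rule ccontr)
    assume "\<not> 1 + x k u > 0"
    then have "u \<in> Z" using that c unfolding Z_def by auto
    then have "c \<le> u" unfolding c_def using Zbdd by (rule cInf_lower)
    then show False using that by simp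
  qed
  have "c \<noteq> s1" using c s1 by auto
  then have s1c: "s1 < c" using c by simp
  define M where "M = (sA + sS) * sC * (1 + muC)"
  define H where "H = (\<lambda>u. (1 + x k u) * exp (2 * M * u))"
  have "H s1 \<le> H c"
  proof (rule incr_right[where f = H])
    show "s1 \<le> c" using s1c by simp
    show "continuous_on {s1..c} H" unfolding H_def
      using cont c by (auto intro!: continuous_intros elim: continuous_on_subset)
    show "\<forall>u\<in>{s1..<c}. (H has_real_derivative
       (xrate sA sS sC muS muC (alpha k) (gamma n y k u) (x k u)) * exp (2 * M * u)
        + (exp (2 * M * u) * (2 * M)) * (1 + x k u)) (at_right u) \<and>
       0 \<le> (xrate sA sS sC muS muC (alpha k) (gamma n y k u) (x k u)) * exp (2 * M * u)
        + (exp (2 * M * u) * (2 * M)) * (1 + x k u)"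
    proof
      fix u assume u: "u \<in> {s1..<c}"
      let ?xd = "xrate sA sS sC muS muC (alpha k) (gamma n y k u) (x k u)"
      have u0: "u \<ge> 0" using u s1 by auto
      have xd: "(x k has_real_derivative ?xd) (at_right u)" using T k u0 by auto
      have d1: "((\<lambda>v. 1 + x k v) has_real_derivative 0 + ?xd) (at_right u)"
        by (rule DERIV_add[OF DERIV_const xd])
      have e: "((\<lambda>v. exp (2 * M * v)) has_real_derivative exp (2 * M * u) * (2 * M)) (at_right u)"
        by (rule DERIV_chain2[OF DERIV_exp]) (auto intro!: derivative_eq_intros)
      have "(H has_real_derivative (0 + ?xd) * exp (2 * M * u)
          + (exp (2 * M * u) * (2 * M)) * (1 + x k u)) (at_right u)"
        unfolding H_def by (rule DERIV_mult[OF d1 e])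
      then have HD: "(H has_real_derivative ?xd * exp (2 * M * u)
          + (exp (2 * M * u) * (2 * M)) * (1 + x k u)) (at_right u)" by simp
      define g where "g = gamma n y k u"
      define cc where "cc = (sA * alpha k + sS * (g - muS)) * sC * (g + muC)"
      have gb: "0 \<le> g" "g \<le> 1" using gamma_bound[OF tr r n k u0] unfolding g_def by auto
      have ccb: "\<bar>cc\<bar> \<le> M" unfolding cc_def M_def
        by (rule cc_bound) (use pars al gb in auto)
      have xpos: "1 + x k u > 0" using pos u by auto
      have "x k u < tau" using T k u0 by blast
      then have xlt: "x k u < 1" using pars by simp
      have xdeq: "?xd = cc * (1 - x k u) * (1 + x k u)"
        unfolding xrate_def cc_def g_def by simp
      have "cc * (1 - x k u) \<ge> - (2 * M)"
      proof -
        have "\<bar>cc * (1 - x k u)\<bar> \<le> M * 2"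
          unfolding abs_mult using ccb xpos xlt by (intro mult_mono) auto
        then show ?thesis by linarith
      qed
      then have "cc * (1 - x k u) + 2 * M \<ge> 0" by simp
      then have "0 \<le> exp (2 * M * u) * (1 + x k u) * (cc * (1 - x k u) + 2 * M)"
        using xpos by simp
      also have "exp (2 * M * u) * (1 + x k u) * (cc * (1 - x k u) + 2 * M)
          = ?xd * exp (2 * M * u) + (exp (2 * M * u) * (2 * M)) * (1 + x k u)"
        unfolding xdeq by (simp add: algebra_simps)
      finally show "(H has_real_derivative ?xd * exp (2 * M * u)
        + (exp (2 * M * u) * (2 * M)) * (1 + x k u)) (at_right u) \<and>
       0 \<le> ?xd * exp (2 * M * u) + (exp (2 * M * u) * (2 * M)) * (1 + x k u)"
        using HD by simp
    qed
  qed
  moreover have "H s1 > 0" unfolding H_def using s1 by simp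
  moreover have "H c \<le> 0" unfolding H_def using c
    by (simp add: mult_nonpos_nonneg)
  ultimately show False by simp
qed



lemma z_deriv:
  fixes f :: "real \<Rightarrow> real"
  assumes d: "(f has_real_derivative cc * (1 - f u) * (1 + f u)) (at_right u)"
    and b: "-1 < f u" "f u < 1"
  shows "((\<lambda>v. ln (1 + f v) - ln (1 - f v)) has_real_derivative 2 * cc) (at_right u)"
proof -
  let ?d = "cc * (1 - f u) * (1 + f u)"
  have d1: "((\<lambda>v. 1 + f v) has_real_derivative 0 + ?d) (at_right u)"
    by (rule DERIV_add[OF DERIV_const d])
  have d2: "((\<lambda>v. 1 - f v) has_real_derivative 0 - ?d) (at_right u)"
    by (rule DERIV_diff[OF DERIV_const d])
  have l1: "((\<lambda>v. ln (1 + f v)) has_real_derivative 1 / (1 + f u) * (0 + ?d)) (at_right u)"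
    by (rule DERIV_chain2[OF DERIV_ln_divide d1]) (use b in simp)
  have l2: "((\<lambda>v. ln (1 - f v)) has_real_derivative 1 / (1 - f u) * (0 - ?d)) (at_right u)"
    by (rule DERIV_chain2[OF DERIV_ln_divide d2]) (use b in simp)
  have "((\<lambda>v. ln (1 + f v) - ln (1 - f v)) has_real_derivative
      1 / (1 + f u) * (0 + ?d) - 1 / (1 - f u) * (0 - ?d)) (at_right u)"
    by (rule DERIV_diff[OF l1 l2])
  moreover have "1 / (1 + f u) * (0 + ?d) = cc * (1 - f u)"
    using b by simp
  moreover have "1 / (1 - f u) * (0 - ?d) = - (cc * (1 + f u))"
    using b by simp
  ultimately have "((\<lambda>v. ln (1 + f v) - ln (1 - f v)) has_real_derivative
      cc * (1 - f u) - - (cc * (1 + f u))) (at_right u)" by simp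
  moreover have "cc * (1 - f u) - - (cc * (1 + f u)) = 2 * cc" by (simp add: algebra_simps)
  ultimately show ?thesis by simp
qed

theorem proposition3:
  fixes n :: nat and sA sS sC muS muC r tau :: real
    and alpha :: "nat \<Rightarrow> real" and x y :: "nat \<Rightarrow> real \<Rightarrow> real"
    and i :: nat and t :: real
  assumes "n \<ge> 2"
    and "sA \<ge> 0" and "sS \<ge> 0" and "sC > 0"
    and "0 \<le> muS" and "muS \<le> 1" and "muC > 0" and "r > 0"
    and "0 < tau" and "tau < 1"
    and "\<forall>j<n. -1 < alpha j \<and> alpha j < 1"
    and "trajectory n sA sS sC muS muC r tau alpha (\<lambda>_. 0) (\<lambda>_. 0) x y"
    and "i < n" and "\<forall>j<n. alpha i \<le> alpha j"
    and "acts x tau i t" and "\<forall>s<t. \<not> acts x tau i s"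
  shows "\<forall>j<n. \<exists>s\<le>t. acts x tau j s"
proof (intro allI impI)
  note n = assms(1) and pars = assms(2-10) and al = assms(11) and tr = assms(12)
    and i = assms(13) and amin = assms(14) and acti = assms(15) and noi = assms(16)
  note T = tr[unfolded trajectory_def]
  fix j assume j: "j < n"
  show "\<exists>s\<le>t. acts x tau j s"
  proof (cases "\<exists>s<t. acts x tau j s")
    case True then show ?thesis by (meson less_imp_le)
  next
    case False
    then have noj: "\<forall>s<t. \<not> acts x tau j s" by blast
    have tpos: "t > 0" using acti unfolding acts_def by simp
    have rcx: "continuous (at_right u) (x k)" if "k < n" "u \<ge> 0" for k u
    proof -
      have "(x k has_real_derivative
            xrate sA sS sC muS muC (alpha k) (gamma n y k u) (x k u)) (at_right u)"
        using T that by auto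
      then show ?thesis by (rule traj_rc)
    qed
    have rcy: "continuous (at_right u) (y k)" if "k < n" "u \<ge> 0" for k u
    proof -
      have "(y k has_real_derivative - r * y k u) (at_right u)" using T that by auto
      then show ?thesis by (rule traj_rc)
    qed
    have lc: "continuous (at_left u) (x k) \<and> continuous (at_left u) (y k)"
      if "k < n" "\<forall>s<t. \<not> acts x tau k s" "0 < u" "u < t" for k u
      using T that by auto
    have yz: "y k u = 0" if k: "k < n" "\<forall>s<t. \<not> acts x tau k s" and u: "0 \<le> u" "u < t" for k u
    proof (cases "u = 0")
      case True then show ?thesis using T k by auto
    next
      case False
      then have upos: "u > 0" using u by simp
      have cy: "continuous_on {0..u} (y k)"
        by (rule cont_Icc) (use upos lc[OF k] rcy[OF k(1)] u in auto)
      have "(\<lambda>v. exp (r * v) * y k v) u = (\<lambda>v. exp (r * v) * y k v) 0"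
      proof (rule const_right[where f="\<lambda>v. exp (r * v) * y k v"])
        show "continuous_on {0..u} (\<lambda>v. exp (r * v) * y k v)"
          using cy by (intro continuous_intros)
        show "\<forall>v\<in>{0..<u}. ((\<lambda>v. exp (r * v) * y k v) has_real_derivative 0) (at_right v)"
          using T k by (auto intro!: exp_weight)
      qed (use upos in simp)
      then show ?thesis using T k by simp
    qed
    have geq: "gamma n y j u = gamma n y i u" if u: "0 \<le> u" "u < t" for u
    proof -
      have "y j u = 0" using yz[OF j noj u] .
      moreover have "y i u = 0" using yz[OF i noi u] .
      ultimately show ?thesis unfolding gamma_def using i j by (simp add: sum_diff1)
    qed
    have cmp: "x i s \<le> x j s" if s: "0 < s" "s < t" for s
    proof -
      have cx: "continuous_on {0..s} (x k)" if k: "k < n" "\<forall>s<t. \<not> acts x tau k s" for k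
        by (rule cont_Icc) (use s lc[OF k] rcx[OF k(1)] in auto)
      have xb: "-1 < x k u \<and> x k u < 1" if "k < n" "0 \<le> u" for k u
      proof
        show "-1 < x k u" by (rule X_bound[OF tr]) (use pars al that n in auto)
        have "x k u < tau" using T that by blast
        then show "x k u < 1" using pars by simp
      qed
      define Z where "Z = (\<lambda>v. (ln (1 + x j v) - ln (1 - x j v)) - (ln (1 + x i v) - ln (1 - x i v)))"
      define cc where "cc = (\<lambda>k v. (sA * alpha k + sS * (gamma n y i v - muS)) * sC * (gamma n y i v + muC))"
      have "Z 0 \<le> Z s"
      proof (rule incr_right[where f = Z and D = "\<lambda>v. 2 * cc j v - 2 * cc i v"])
        show "0 \<le> s" using s by simp
        have nz: "1 + x k v \<noteq> 0 \<and> 1 - x k v \<noteq> 0" if "k < n" "v \<in> {0..s}" for k v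
          using xb[of k v] that by auto
        show "continuous_on {0..s} Z" unfolding Z_def
          using cx[OF j noj] cx[OF i noi] nz[OF i] nz[OF j]
          by (intro continuous_intros) auto
        show "\<forall>v\<in>{0..<s}. (Z has_real_derivative 2 * cc j v - 2 * cc i v) (at_right v) \<and>
            0 \<le> 2 * cc j v - 2 * cc i v"
        proof
          fix v assume v: "v \<in> {0..<s}"
          then have v0: "0 \<le> v" "v < t" using s by auto
          have dk: "((\<lambda>w. ln (1 + x k w) - ln (1 - x k w)) has_real_derivative 2 * cc k v) (at_right v)"
            if k: "k < n" "gamma n y k v = gamma n y i v" for k
          proof (rule z_deriv)
            have "(x k has_real_derivative
                xrate sA sS sC muS muC (alpha k) (gamma n y k v) (x k v)) (at_right v)"
              using T k(1) v0 by blast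
            then show "(x k has_real_derivative cc k v * (1 - x k v) * (1 + x k v)) (at_right v)"
              unfolding xrate_def cc_def k(2) by simp
            show "-1 < x k v" "x k v < 1" using xb[OF k(1) v0(1)] by auto
          qed
          have "(Z has_real_derivative 2 * cc j v - 2 * cc i v) (at_right v)"
            unfolding Z_def by (rule DERIV_diff[OF dk[OF j geq[OF v0]] dk[OF i refl]])
          moreover have "0 \<le> 2 * cc j v - 2 * cc i v"
          proof -
            have g: "0 \<le> gamma n y i v" using gamma_bound[OF tr _ n i v0(1)] pars by auto
            have "cc j v - cc i v = sA * (alpha j - alpha i) * sC * (gamma n y i v + muC)"
              unfolding cc_def by (simp add: algebra_simps)
            also have "\<dots> \<ge> 0" using pars g amin j by simp
            finally show ?thesis by simp
          qed
          ultimately show "(Z has_real_derivative 2 * cc j v - 2 * cc i v) (at_right v) \<and>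
            0 \<le> 2 * cc j v - 2 * cc i v" by simp
        qed
      qed
      moreover have "Z 0 = 0" unfolding Z_def using T i j by simp
      ultimately have Zs: "Z s \<ge> 0" by simp
      show ?thesis
      proof (rule ccontr)
        assume "\<not> x i s \<le> x j s"
        then have lt: "x j s < x i s" by simp
        have bj: "-1 < x j s" "x j s < 1" and bi: "-1 < x i s" "x i s < 1"
          using xb[OF j] xb[OF i] s by auto
        have "ln (1 + x j s) < ln (1 + x i s)" using lt bj bi by simp
        moreover have "ln (1 - x i s) < ln (1 - x j s)" using lt bj bi by simp
        ultimately have "Z s < 0" unfolding Z_def by simp
        then show False using Zs by simp
      qed
    qed
    have "acts x tau j t" unfolding acts_def
    proof
      show "0 < t" by (rule tpos)
      have li: "(x i \<longlongrightarrow> tau) (at_left t)" using acti unfolding acts_def by simp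
      have ev: "eventually (\<lambda>u. u \<in> {0<..<t}) (at_left t)"
        by (rule eventually_at_left_real) (rule tpos)
      show "(x j \<longlongrightarrow> tau) (at_left t)"
      proof (rule tendsto_sandwich[OF _ _ li tendsto_const])
        show "eventually (\<lambda>u. x i u \<le> x j u) (at_left t)"
          using ev by eventually_elim (auto intro: cmp)
        show "eventually (\<lambda>u. x j u \<le> tau) (at_left t)"
          using ev by eventually_elim (use T j in \<open>auto intro: less_imp_le\<close>)
      qed
    qed
    then show ?thesis by blast
  qed
qed


end
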